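(* Let $\mathcal{C}=(\mathcal{T},\mathcal{I},\mathcal{R})$ be an extraction context with thresholds \textit{minsupp} and \textit{minbond}. Then $\mathcal{MM}ax\mathcal{CR}=\mathcal{MRCP}\cup\mathcal{M}ax\mathcal{CRCP}$, with each element $J$ recorded together with $\mathit{Supp}(\wedge J)$ and $\mathit{bond}(J)$, is an exact concise representation of the set $\mathcal{RCP}$ of rare correlated patterns.
   Context: An extraction context is a triple $\mathcal{C}=(\mathcal{T},\mathcal{I},\mathcal{R})$ with $\mathcal{T}$ a finite set of transactions, $\mathcal{I}$ a finite set of items and $\mathcal{R}\subseteq\mathcal{T}\times\mathcal{I}$. For a pattern $I\subseteq\mathcal{I}$: $\mathit{Supp}(\wedge I)=|\{t:\forall i\in I,(t,i)\in\mathcal{R}\}|$, $\mathit{Supp}(\vee I)=|\{t:\exists i\in I,(t,i)\in\mathcal{R}\}|$, and for nonempty $I$, $\mathit{bond}(I)=\mathit{Supp}(\wedge I)/\mathit{Supp}(\vee I)$ (with $\mathit{bond}(\emptyset)=+\infty$ by convention). $\mathcal{CP}=\{I:\mathit{bond}(I)\ge\textit{minbond}\}$; $\mathcal{RCP}=\{I\in\mathcal{CP}:\mathit{Supp}(\wedge I)<\textit{minsupp}\}$. $\mathcal{CRCP}=\{I\in\mathcal{RCP}:\forall I_1\supsetneq I,\ \mathit{bond}(I)>\mathit{bond}(I_1)\}$; $\mathcal{MRCP}=\{I\in\mathcal{RCP}:\forall I_1\subsetneq I,\ \mathit{bond}(I)<\mathit{bond}(I_1)\}$. Maximal correlated patterns: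 $\mathcal{M}ax\mathcal{CP}=\{I\in\mathcal{CP}:\forall I_1\supsetneq I,\ \mathit{bond}(I_1)<\textit{minbond}\}$. $\mathcal{M}ax\mathcal{CRCP}=\mathcal{CRCP}\cap\mathcal{M}ax\mathcal{CP}$. A family $\mathcal{S}\subseteq\mathcal{RCP}$, with each $J\in\mathcal{S}$ recorded together with $\mathit{Supp}(\wedge J)$ and $\mathit{bond}(J)$, is an exact concise representation of $\mathcal{RCP}$ if, for every pattern $I\subseteq\mathcal{I}$, the recorded data alone suffice to decide whether $I\in\mathcal{RCP}$ and, when $I\in\mathcal{RCP}$, to determine exactly $\mathit{Supp}(\wedge I)$ and $\mathit{bond}(I)$. *)

theory Defs
  imports Main "HOL-Library.Extended_Real"
begin

definition extraction_context :: "'t set \<Rightarrow> 'i set \<Rightarrow> ('t \<times> 'i) set \<Rightarrow> bool" where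
  "extraction_context T Is R \<longleftrightarrow> finite T \<and> finite Is \<and> R \<subseteq> T \<times> Is"

definition supp_conj :: "'t set \<Rightarrow> ('t \<times> 'i) set \<Rightarrow> 'i set \<Rightarrow> nat" where
  "supp_conj T R I = card {t \<in> T. \<forall>i\<in>I. (t, i) \<in> R}"

definition supp_disj :: "'t set \<Rightarrow> ('t \<times> 'i) set \<Rightarrow> 'i set \<Rightarrow> nat" where
  "supp_disj T R I = card {t \<in> T. \<exists>i\<in>I. (t, i) \<in> R}"

definition bond :: "'t set \<Rightarrow> ('t \<times> 'i) set \<Rightarrow> 'i set \<Rightarrow> ereal" where
  "bond T R I = (if I = {} then \<infinity>
                 else ereal (real (supp_conj T R I) / real (supp_disj T R I)))"

definition CP :: "'t set \<Rightarrow> 'i set \<Rightarrow> ('t \<times> 'i) set \<Rightarrow> real \<Rightarrow> 'i set set" where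
  "CP T Is R minbond = {I. I \<subseteq> Is \<and> bond T R I \<ge> ereal minbond}"

definition RCP :: "'t set \<Rightarrow> 'i set \<Rightarrow> ('t \<times> 'i) set \<Rightarrow> real \<Rightarrow> real \<Rightarrow> 'i set set" where
  "RCP T Is R minsupp minbond =
     {I \<in> CP T Is R minbond. real (supp_conj T R I) < minsupp}"

definition CRCP :: "'t set \<Rightarrow> 'i set \<Rightarrow> ('t \<times> 'i) set \<Rightarrow> real \<Rightarrow> real \<Rightarrow> 'i set set" where
  "CRCP T Is R minsupp minbond =
     {I \<in> RCP T Is R minsupp minbond.
        \<forall>I1. I1 \<subseteq> Is \<and> I \<subset> I1 \<longrightarrow> bond T R I > bond T R I1}"

definition MRCP :: "'t set \<Rightarrow> 'i set \<Rightarrow> ('t \<times> 'i) set \<Rightarrow> real \<Rightarrow> real \<Rightarrow> 'i set set" where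
  "MRCP T Is R minsupp minbond =
     {I \<in> RCP T Is R minsupp minbond.
        \<forall>I1. I1 \<subset> I \<longrightarrow> bond T R I < bond T R I1}"

definition MaxCP :: "'t set \<Rightarrow> 'i set \<Rightarrow> ('t \<times> 'i) set \<Rightarrow> real \<Rightarrow> 'i set set" where
  "MaxCP T Is R minbond =
     {I \<in> CP T Is R minbond.
        \<forall>I1. I1 \<subseteq> Is \<and> I \<subset> I1 \<longrightarrow> bond T R I1 < ereal minbond}"

definition MaxCRCP :: "'t set \<Rightarrow> 'i set \<Rightarrow> ('t \<times> 'i) set \<Rightarrow> real \<Rightarrow> real \<Rightarrow> 'i set set" where
  "MaxCRCP T Is R minsupp minbond = CRCP T Is R minsupp minbond \<inter> MaxCP T Is R minbond"

definition MMaxCR :: "'t set \<Rightarrow> 'i set \<Rightarrow> ('t \<times> 'i) set \<Rightarrow> real \<Rightarrow> real \<Rightarrow> 'i set set" where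
  "MMaxCR T Is R minsupp minbond = MRCP T Is R minsupp minbond \<union> MaxCRCP T Is R minsupp minbond"

definition recorded :: "'t set \<Rightarrow> ('t \<times> 'i) set \<Rightarrow> 'i set set \<Rightarrow> ('i set \<times> nat \<times> ereal) set" where
  "recorded T R S = {(J, supp_conj T R J, bond T R J) | J. J \<in> S}"

definition exact_concise_rep ::
  "real \<Rightarrow> real \<Rightarrow> ('t set \<Rightarrow> 'i set \<Rightarrow> ('t \<times> 'i) set \<Rightarrow> 'i set set) \<Rightarrow> bool" where
  "exact_concise_rep minsupp minbond rep \<longleftrightarrow>
     (\<forall>T Is R. extraction_context T Is R \<longrightarrow> rep T Is R \<subseteq> RCP T Is R minsupp minbond) \<and>
     (\<exists>Dec :: ('i set \<times> nat \<times> ereal) set \<Rightarrow> 'i set \<Rightarrow> (nat \<times> ereal) option.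
        \<forall>T Is R. extraction_context T Is R \<longrightarrow>
          (\<forall>I. I \<subseteq> Is \<longrightarrow>
             Dec (recorded T R (rep T Is R)) I =
               (if I \<in> RCP T Is R minsupp minbond
                then Some (supp_conj T R I, bond T R I) else None)))"

end

theory Submission
  imports Defs
begin

lemma sc_mono: "finite T \<Longrightarrow> J \<subseteq> I \<Longrightarrow> supp_conj T R I \<le> supp_conj T R J"
  unfolding supp_conj_def by (rule card_mono) auto

lemma sd_mono: "finite T \<Longrightarrow> J \<subseteq> I \<Longrightarrow> supp_disj T R J \<le> supp_disj T R I"
  unfolding supp_disj_def by (rule card_mono) auto

lemma sc_le_sd: "finite T \<Longrightarrow> J \<noteq> {} \<Longrightarrow> supp_conj T R J \<le> supp_disj T R J"
  unfolding supp_conj_def supp_disj_def by (rule card_mono) auto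

lemma bond_anti:
  assumes T: "finite T" and JI: "J \<subseteq> I"
  shows "bond T R I \<le> bond T R J"
proof (cases "J = {}")
  case True then show ?thesis by (simp add: bond_def)
next
  case False
  hence I: "I \<noteq> {}" using JI by auto
  have a: "supp_conj T R I \<le> supp_conj T R J" using sc_mono[OF T JI] .
  have b: "supp_disj T R J \<le> supp_disj T R I" using sd_mono[OF T JI] .
  have c: "supp_conj T R J \<le> supp_disj T R J" using sc_le_sd[OF T False] .
  have "real (supp_conj T R I) / real (supp_disj T R I) \<le> real (supp_conj T R J) / real (supp_disj T R J)"
  proof (cases "supp_disj T R I = 0")
    case True then show ?thesis by simp
  next
    case nI: False
    show ?thesis
    proof (cases "supp_disj T R J = 0")
      case True
      then have "supp_conj T R I = 0" using a c by simp
      then show ?thesis by simp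
    next
      case False
      have "real (supp_conj T R I) / real (supp_disj T R I) \<le> real (supp_conj T R J) / real (supp_disj T R I)"
        using a nI by (simp add: divide_right_mono)
      also have "\<dots> \<le> real (supp_conj T R J) / real (supp_disj T R J)"
        using b False by (simp add: divide_left_mono)
      finally show ?thesis .
    qed
  qed
  then show ?thesis using False I by (simp add: bond_def)
qed

lemma bond_eq_sc:
  assumes T: "finite T" and JI: "J \<subseteq> I" and J: "J \<noteq> {}" and eq: "bond T R J = bond T R I"
  shows "supp_conj T R J = supp_conj T R I"
proof -
  have I: "I \<noteq> {}" using JI J by auto
  have a: "supp_conj T R I \<le> supp_conj T R J" using sc_mono[OF T JI] .
  have b: "supp_disj T R J \<le> supp_disj T R I" using sd_mono[OF T JI] .
  have c: "supp_conj T R J \<le> supp_disj T R J" using sc_le_sd[OF T J] .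
  have e: "real (supp_conj T R J) / real (supp_disj T R J) = real (supp_conj T R I) / real (supp_disj T R I)"
    using eq I J by (simp add: bond_def)
  show ?thesis
  proof (cases "supp_conj T R J = 0")
    case True then show ?thesis using a by simp
  next
    case False
    hence pJ: "supp_disj T R J > 0" using c by simp
    hence pI: "supp_disj T R I > 0" using b by simp
    have "real (supp_conj T R J) / real (supp_disj T R J) > 0" using False pJ by simp
    hence "supp_conj T R I > 0" using e by (cases "supp_conj T R I = 0") auto
    from e pJ pI have "real (supp_conj T R J) * real (supp_disj T R I) = real (supp_conj T R I) * real (supp_disj T R J)"
      by (simp add: field_simps)
    hence m: "supp_conj T R J * supp_disj T R I = supp_conj T R I * supp_disj T R J"
      by (metis of_nat_eq_iff of_nat_mult)
    have "supp_conj T R J * supp_disj T R J \<le> supp_conj T R J * supp_disj T R I"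
      using b by simp
    hence "supp_conj T R J * supp_disj T R J \<le> supp_conj T R I * supp_disj T R J" using m by simp
    hence "supp_conj T R J \<le> supp_conj T R I" using pJ by simp
    then show ?thesis using a by simp
  qed
qed

lemma bond_empty_iff: "bond T R I = \<infinity> \<longleftrightarrow> I = {}"
  by (simp add: bond_def)

lemma exists_mrcp:
  assumes ctx: "extraction_context T Is R" and I: "I \<in> RCP T Is R minsupp minbond"
  shows "\<exists>J. J \<subseteq> I \<and> J \<in> MRCP T Is R minsupp minbond \<and> bond T R J = bond T R I"
proof -
  have T: "finite T" and fIs: "finite Is" using ctx by (auto simp: extraction_context_def)
  have IIs: "I \<subseteq> Is" and Ib: "ereal minbond \<le> bond T R I" and Is: "real (supp_conj T R I) < minsupp"
    using I by (auto simp: RCP_def CP_def)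
  have fI: "finite I" using IIs fIs finite_subset by blast
  let ?A = "{J. J \<subseteq> I \<and> bond T R J = bond T R I}"
  have "finite ?A" by (rule finite_subset[of _ "Pow I"]) (use fI in auto)
  moreover have "I \<in> ?A" by simp
  ultimately have "\<exists>m\<in>?A. m \<le> I \<and> (\<forall>b\<in>?A. b \<le> m \<longrightarrow> m = b)"
    by (rule finite_has_minimal2)
  then obtain J where J: "J \<in> ?A" and min: "\<forall>b\<in>?A. b \<le> J \<longrightarrow> J = b"
    by blast
  have JI: "J \<subseteq> I" and Jb: "bond T R J = bond T R I" using J by auto
  have sc: "supp_conj T R J = supp_conj T R I"
  proof (cases "J = {}")
    case True
    then have "I = {}" using Jb by (simp add: bond_def split: if_splits)
    then show ?thesis using True by simp
  next
    case False then show ?thesis using bond_eq_sc[OF T JI False Jb] by simp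
  qed
  have "J \<in> RCP T Is R minsupp minbond"
    using JI IIs Jb Ib Is sc by (auto simp: RCP_def CP_def)
  moreover have "\<forall>I1. I1 \<subset> J \<longrightarrow> bond T R J < bond T R I1"
  proof (intro allI impI)
    fix I1 assume "I1 \<subset> J"
    hence le: "bond T R J \<le> bond T R I1" using bond_anti[OF T] by blast
    have "bond T R I1 \<noteq> bond T R J"
    proof
      assume "bond T R I1 = bond T R J"
      hence "I1 \<in> ?A" using \<open>I1 \<subset> J\<close> JI Jb by auto
      then show False using min \<open>I1 \<subset> J\<close> by blast
    qed
    then show "bond T R J < bond T R I1" using le by simp
  qed
  ultimately have "J \<in> MRCP T Is R minsupp minbond" unfolding MRCP_def by blast
  then show ?thesis using JI Jb by blast
qed

lemma exists_max:
  assumes ctx: "extraction_context T Is R" and I: "I \<in> RCP T Is R minsupp minbond"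
  shows "\<exists>K. I \<subseteq> K \<and> K \<in> MaxCRCP T Is R minsupp minbond"
proof -
  have T: "finite T" and fIs: "finite Is" using ctx by (auto simp: extraction_context_def)
  have IIs: "I \<subseteq> Is" and Ib: "ereal minbond \<le> bond T R I" and Is: "real (supp_conj T R I) < minsupp"
    using I by (auto simp: RCP_def CP_def)
  let ?A = "{K. I \<subseteq> K \<and> K \<subseteq> Is \<and> ereal minbond \<le> bond T R K}"
  have "finite ?A" by (rule finite_subset[of _ "Pow Is"]) (use fIs in auto)
  moreover have "I \<in> ?A" using IIs Ib by simp
  ultimately have "\<exists>m\<in>?A. I \<le> m \<and> (\<forall>b\<in>?A. m \<le> b \<longrightarrow> m = b)"
    by (rule finite_has_maximal2)
  then obtain K where K: "K \<in> ?A" and max: "\<forall>b\<in>?A. K \<le> b \<longrightarrow> K = b"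
    by blast
  have IK: "I \<subseteq> K" and KIs: "K \<subseteq> Is" and Kb: "ereal minbond \<le> bond T R K" using K by auto
  have "supp_conj T R K \<le> supp_conj T R I" using sc_mono[OF T IK] .
  hence Ks: "real (supp_conj T R K) < minsupp" using Is by linarith
  have big: "\<forall>I1. I1 \<subseteq> Is \<and> K \<subset> I1 \<longrightarrow> bond T R I1 < ereal minbond"
  proof (intro allI impI)
    fix I1 assume a: "I1 \<subseteq> Is \<and> K \<subset> I1"
    show "bond T R I1 < ereal minbond"
    proof (rule ccontr)
      assume "\<not> bond T R I1 < ereal minbond"
      hence "I1 \<in> ?A" using a IK by auto
      then show False using max a by auto
    qed
  qed
  have "K \<in> RCP T Is R minsupp minbond" using KIs Kb Ks by (auto simp: RCP_def CP_def)
  moreover have "K \<in> CP T Is R minbond" using KIs Kb by (auto simp: CP_def)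
  moreover have "\<forall>I1. I1 \<subseteq> Is \<and> K \<subset> I1 \<longrightarrow> bond T R K > bond T R I1"
  proof (intro allI impI)
    fix I1 assume "I1 \<subseteq> Is \<and> K \<subset> I1"
    hence "bond T R I1 < ereal minbond" using big by blast
    then show "bond T R K > bond T R I1" using Kb by (rule less_le_trans)
  qed
  ultimately show ?thesis using IK big
    by (auto simp: MaxCRCP_def CRCP_def MaxCP_def)
qed

lemma rcp_convex:
  assumes T: "finite T" and J: "J \<in> RCP T Is R minsupp minbond" and K: "K \<in> RCP T Is R minsupp minbond"
    and JI: "J \<subseteq> I" and IK: "I \<subseteq> K"
  shows "I \<in> RCP T Is R minsupp minbond"
proof -
  have "bond T R K \<le> bond T R I" using bond_anti[OF T IK] .
  moreover have "supp_conj T R I \<le> supp_conj T R J" using sc_mono[OF T JI] .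
  moreover have "I \<subseteq> Is" using K IK by (auto simp: RCP_def CP_def)
  moreover have "ereal minbond \<le> bond T R K" using K by (auto simp: RCP_def CP_def)
  moreover have "real (supp_conj T R J) < minsupp" using J by (auto simp: RCP_def CP_def)
  ultimately show ?thesis unfolding RCP_def CP_def by auto
qed

definition goodp :: "('i set \<times> nat \<times> ereal) set \<Rightarrow> 'i set \<Rightarrow> nat \<times> ereal \<Rightarrow> bool" where
  "goodp D I p = ((\<exists>J. (J, fst p, snd p) \<in> D \<and> J \<subseteq> I) \<and>
      (\<forall>J' s' b'. (J', s', b') \<in> D \<and> J' \<subseteq> I \<longrightarrow> snd p \<le> b'))"

definition decode :: "('i set \<times> nat \<times> ereal) set \<Rightarrow> 'i set \<Rightarrow> (nat \<times> ereal) option" where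
  "decode D I = (if (\<exists>J s b. (J, s, b) \<in> D \<and> J \<subseteq> I) \<and> (\<exists>K s b. (K, s, b) \<in> D \<and> I \<subseteq> K)
     then Some (SOME p. goodp D I p) else None)"

theorem mainTheorem6:
  fixes minsupp minbond :: real
  shows "exact_concise_rep minsupp minbond
           (\<lambda>(T :: 't set) (Is :: 'i set) R. MMaxCR T Is R minsupp minbond)"
  unfolding exact_concise_rep_def
proof (intro conjI)
  show "\<forall>T Is R. extraction_context T Is R \<longrightarrow>
      (case T of T \<Rightarrow> \<lambda>Is R. MMaxCR T Is R minsupp minbond) Is R \<subseteq> RCP T Is R minsupp minbond"
    by (auto simp: MMaxCR_def MRCP_def MaxCRCP_def CRCP_def)
  show "\<exists>Dec :: ('i set \<times> nat \<times> ereal) set \<Rightarrow> 'i set \<Rightarrow> (nat \<times> ereal) option.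
        \<forall>(T :: 't set) Is R. extraction_context T Is R \<longrightarrow>
          (\<forall>I. I \<subseteq> Is \<longrightarrow>
             Dec (recorded T R ((case T of T \<Rightarrow> \<lambda>Is R. MMaxCR T Is R minsupp minbond) Is R)) I =
               (if I \<in> RCP T Is R minsupp minbond
                then Some (supp_conj T R I, bond T R I) else None))"
  proof (rule exI[of _ decode], intro allI impI)
    fix T :: "'t set" and Is R I
    assume ctx: "extraction_context T Is R" and IIs: "I \<subseteq> Is"
    have T: "finite T" using ctx by (simp add: extraction_context_def)
    let ?S = "MMaxCR T Is R minsupp minbond"
    let ?D = "recorded T R ?S"
    have SR: "?S \<subseteq> RCP T Is R minsupp minbond"
      by (auto simp: MMaxCR_def MRCP_def MaxCRCP_def CRCP_def)
    have memD: "(J, s, b) \<in> ?D \<longleftrightarrow> J \<in> ?S \<and> s = supp_conj T R J \<and> b = bond T R J" for J s b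
      by (auto simp: recorded_def)
    show "decode ?D I = (if I \<in> RCP T Is R minsupp minbond
                then Some (supp_conj T R I, bond T R I) else None)"
    proof (cases "I \<in> RCP T Is R minsupp minbond")
      case False
      have "\<not> ((\<exists>J s b. (J, s, b) \<in> ?D \<and> J \<subseteq> I) \<and> (\<exists>K s b. (K, s, b) \<in> ?D \<and> I \<subseteq> K))"
      proof
        assume "(\<exists>J s b. (J, s, b) \<in> ?D \<and> J \<subseteq> I) \<and> (\<exists>K s b. (K, s, b) \<in> ?D \<and> I \<subseteq> K)"
        then obtain J K where "J \<in> ?S" "J \<subseteq> I" "K \<in> ?S" "I \<subseteq> K" using memD by blast
        then show False using rcp_convex[OF T, of J Is R minsupp minbond K I] SR False by blast
      qed
      then show ?thesis using False by (simp add: decode_def)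
    next
      case True
      obtain J0 where J0: "J0 \<subseteq> I" "J0 \<in> MRCP T Is R minsupp minbond" "bond T R J0 = bond T R I"
        using exists_mrcp[OF ctx True] by blast
      obtain K where K: "I \<subseteq> K" "K \<in> MaxCRCP T Is R minsupp minbond"
        using exists_max[OF ctx True] by blast
      have J0S: "J0 \<in> ?S" and KS: "K \<in> ?S" using J0 K by (auto simp: MMaxCR_def)
      have cond: "(\<exists>J s b. (J, s, b) \<in> ?D \<and> J \<subseteq> I) \<and> (\<exists>K s b. (K, s, b) \<in> ?D \<and> I \<subseteq> K)"
        using J0S KS J0(1) K(1) memD by blast
      have g: "goodp ?D I (supp_conj T R J0, bond T R J0)"
        unfolding goodp_def using J0S J0 memD bond_anti[OF T] by fastforce
      have uniq: "p = (supp_conj T R I, bond T R I)" if gp: "goodp ?D I p" for p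
      proof -
        obtain s b where p: "p = (s, b)" by (cases p)
        from gp p obtain J where J: "(J, s, b) \<in> ?D" "J \<subseteq> I"
          and mn: "\<forall>J' s' b'. (J', s', b') \<in> ?D \<and> J' \<subseteq> I \<longrightarrow> b \<le> b'"
          unfolding goodp_def by auto
        have JS: "J \<in> ?S" and s: "s = supp_conj T R J" and b: "b = bond T R J" using J memD by auto
        have "b \<le> bond T R J0" using mn J0S J0(1) memD by blast
        moreover have "bond T R I \<le> b" using b bond_anti[OF T J(2)] by simp
        ultimately have bI: "b = bond T R I" using J0(3) by simp
        have "s = supp_conj T R I"
        proof (cases "J = {}")
          case True
          then have "I = {}" using bI b by (simp add: bond_def split: if_splits)
          then show ?thesis using True s by simp
        next
          case False
          then show ?thesis using bond_eq_sc[OF T J(2) False] bI b s by simp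
        qed
        then show ?thesis using p bI by simp
      qed
      have "(SOME p. goodp ?D I p) = (supp_conj T R I, bond T R I)"
        using someI[of "goodp ?D I", OF g] uniq by blast
      then show ?thesis using True cond by (simp add: decode_def)
    qed
  qed
qed

end
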